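(* Let $k\ge 2$ and $r\ge 0$ be integers, and let $\vec m=(m_0,\dots,m_r)$ be a vector of nonnegative integers with at least one positive entry. Then \[ V(\vec m)\le k\log_{b(k)} W(\vec m),\qquad\text{where } b(k)=\frac{k^k}{(k-1)^{k-1}},\quad W(\vec m)=\sum_{i=0}^r m_i k^{2i}. \]
   Context: Let $N=\sum_i m_i$, $\mathcal{Y}=\{1,\dots,k\}$, $\mathcal{X}=[k]^N$, and experts $h_j(x)=x_j$, $j=1,\dots,N$, where $m_i$ of the experts are assigned budget $B(h_j)=i$. Let $\mathcal{P}_{\vec m}$ be the set of finite sequences of examples in $\mathcal{X}\times\mathcal{Y}$ for which some $h_j$ errs ($h_j(x)\ne y$) on at most $B(h_j)$ examples. $V(\vec m)=\mathsf{opt}_{\operatorname{bandit}}^{\operatorname{adap}}(\mathcal{P}_{\vec m})$, defined as follows. Bandit feedback game: each round an adaptive adversary chooses $x_t$ from the history; the learner chooses a distribution $\pi^{(t)}$ on $\mathcal{Y}$ (from history and $x_t$); the adversary, seeing $\pi^{(t)}$, chooses a distribution $\tau^{(t)}$; $\hat y_t\sim\pi^{(t)}$, $y_t\sim\tau^{(t)}$; the learner learns only whether $\hat y_t=y_t$. The adversary must ensure that whenever the history is realizable, every $y_t$ in the support of $\tau^{(t)}$ keeps it realizable, where a history of (instance, correct/incorrect, prediction) triples is realizable if some choice of true labels agreeing with the observations gives a sequence in $\mathcal{P}_{\vec m}$. $\mathsf{opt}_{\operatorname{bandit}}^{\operatorname{adap}}=\inf_{\text{learner}}\sup_{\text{adversary}}$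 expected number of mistakes ($\hat y_t\ne y_t$). *)

theory Defs
  imports "HOL-Probability.Probability"
begin

text \<open>An instance assigns a label to every expert: h_(i,c)(x) = x (i,c).\<close>

type_synonym expert = "nat \<times> nat"
type_synonym inst = "expert \<Rightarrow> nat"

definition experts :: "nat list \<Rightarrow> expert set" where
  "experts m = {(i, c). i < length m \<and> c < m ! i}"

definition budget :: "expert \<Rightarrow> nat" where
  "budget e = fst e"

definition labels :: "nat \<Rightarrow> nat set" where
  "labels k = {1..k}"

definition instances :: "nat list \<Rightarrow> nat \<Rightarrow> inst set" where
  "instances m k = experts m \<rightarrow>\<^sub>E labels k"

definition Pclass :: "nat list \<Rightarrow> nat \<Rightarrow> (inst \<times> nat) list set" where
  "Pclass m k = {s. (\<forall>t < length s. fst (s ! t) \<in> instances m k \<and> snd (s ! t) \<in> labels k) \<and>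
      (\<exists>e \<in> experts m. card {t. t < length s \<and> fst (s ! t) e \<noteq> snd (s ! t)} \<le> budget e)}"

text \<open>Observation histories: (instance, correct?, prediction).\<close>
type_synonym obs = "inst \<times> bool \<times> nat"

definition realizable :: "nat list \<Rightarrow> nat \<Rightarrow> obs list \<Rightarrow> bool" where
  "realizable m k h \<longleftrightarrow> (\<exists>ys. length ys = length h \<and>
      (\<forall>t < length h. fst (snd (h ! t)) \<longleftrightarrow> ys ! t = snd (snd (h ! t))) \<and>
      zip (map fst h) ys \<in> Pclass m k)"

type_synonym round = "inst \<times> nat pmf \<times> nat pmf \<times> nat \<times> nat"

definition observe :: "round list \<Rightarrow> obs list" where
  "observe h = map (\<lambda>(x, \<pi>, \<tau>, yh, y). (x, yh = y, yh)) h"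

definition mistakes :: "round list \<Rightarrow> nat" where
  "mistakes h = length (filter (\<lambda>(x, \<pi>, \<tau>, yh, y). yh \<noteq> y) h)"

type_synonym learner = "obs list \<Rightarrow> inst \<Rightarrow> nat pmf"
type_synonym adversary = "(round list \<Rightarrow> inst) \<times> (round list \<Rightarrow> nat pmf \<Rightarrow> nat pmf)"

definition valid_learner :: "nat \<Rightarrow> learner \<Rightarrow> bool" where
  "valid_learner k L \<longleftrightarrow> (\<forall>h x. set_pmf (L h x) \<subseteq> labels k)"

definition valid_adversary :: "nat list \<Rightarrow> nat \<Rightarrow> adversary \<Rightarrow> bool" where
  "valid_adversary m k A \<longleftrightarrow>
     (\<forall>h. fst A h \<in> instances m k) \<and>
     (\<forall>h \<pi>. set_pmf (snd A h \<pi>) \<subseteq> labels k \<and>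
        (realizable m k (observe h) \<longrightarrow>
          (\<forall>y \<in> set_pmf (snd A h \<pi>). \<forall>yh \<in> labels k.
             realizable m k (observe h @ [(fst A h, yh = y, yh)]))))"

definition play_round :: "learner \<Rightarrow> adversary \<Rightarrow> round list \<Rightarrow> round list pmf" where
  "play_round L A h =
     (let x = fst A h; \<pi> = L (observe h) x; \<tau> = snd A h \<pi> in
      do { yh \<leftarrow> \<pi>; y \<leftarrow> \<tau>; return_pmf (h @ [(x, \<pi>, \<tau>, yh, y)]) })"

fun play :: "learner \<Rightarrow> adversary \<Rightarrow> nat \<Rightarrow> round list pmf" where
  "play L A 0 = return_pmf []"
| "play L A (Suc T) = play L A T \<bind> play_round L A"

definition expected_mistakes :: "learner \<Rightarrow> adversary \<Rightarrow> nat \<Rightarrow> real" where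
  "expected_mistakes L A T = measure_pmf.expectation (play L A T) (\<lambda>h. real (mistakes h))"

definition V :: "nat list \<Rightarrow> nat \<Rightarrow> ereal" where
  "V m k = (INF L \<in> {L. valid_learner k L}. SUP A \<in> {A. valid_adversary m k A}.
              SUP T. ereal (expected_mistakes L A T))"

definition bk :: "nat \<Rightarrow> real" where
  "bk k = real k ^ k / real (k - 1) ^ (k - 1)"

definition W :: "nat list \<Rightarrow> nat \<Rightarrow> real" where
  "W m k = (\<Sum>i < length m. real (m ! i) * real k ^ (2 * i))"

end

theory Submission
  imports Defs
begin

lemma ln_bk:
  assumes k: "k \<ge> 2"
  shows "ln (bk k) = real k * ln (real k) - real (k - 1) * ln (real (k - 1))"
proof -
  have p1: "real k > 0" using k by simp
  have p2: "real (k - 1) > 0" using k by simp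
  have "ln (bk k) = ln (real k ^ k) - ln (real (k - 1) ^ (k - 1))"
    unfolding bk_def using p1 p2 by (simp add: ln_div)
  also have "\<dots> = real k * ln (real k) - real (k - 1) * ln (real (k - 1))"
    using p1 p2 by (simp add: ln_realpow)
  finally show ?thesis .
qed

lemma ln2_le: "ln (2::real) \<le> 3/4"
proof -
  have e: "exp 1 \<ge> (2.7::real)" using e_approx_32 by (simp add: abs_if split: if_splits)
  have "(2.7::real)^3 \<le> exp 1 ^ 3" using e by (intro power_mono) auto
  also have "\<dots> = exp 3" by (simp add: exp_of_nat_mult[symmetric])
  finally have "exp (3::real) \<ge> (27/10)^3" by simp
  moreover have "(27/10::real)^3 \<ge> 16" by (simp add: power3_eq_cube)
  ultimately have "exp (3::real) \<ge> 16" by linarith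
  moreover have "exp (3::real) = exp (3/4) ^ 4" by (simp add: exp_of_nat_mult[symmetric])
  ultimately have "exp (3/4::real) ^ 4 \<ge> 2 ^ 4" by simp
  hence "2 ^ Suc 3 \<le> exp (3/4::real) ^ Suc 3" by (simp add: eval_nat_numeral)
  hence "exp (3/4::real) \<ge> 2" by (rule power_le_imp_le_base) auto
  thus ?thesis by (metis exp_gt_zero ln_exp ln_le_cancel_iff zero_less_numeral)
qed

lemma ln3_ge: "ln (3::real) \<ge> 1"
proof -
  have e: "exp 1 \<le> (3::real)" using e_approx_32 by (simp add: abs_if split: if_splits)
  hence "ln (exp 1) \<le> ln (3::real)" by (subst ln_le_cancel_iff) auto
  thus ?thesis by simp
qed

lemma ln_bk_pos:
  assumes k: "k \<ge> 2"
  shows "ln (bk k) > 0"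
proof -
  have r: "real (k-1) = real k - 1" using k by simp
  have "ln (real (k-1)) \<le> ln (real k)" using k by (subst ln_le_cancel_iff) auto
  moreover have lk: "ln (real k) > 0" using k by simp
  moreover have "real k - 1 \<ge> 0" using k by simp
  ultimately have A: "(real k - 1) * ln (real (k - 1)) \<le> (real k - 1) * ln (real k)"
    by (intro mult_left_mono) auto
  have B: "(real k - 1) * ln (real k) = real k * ln (real k) - ln (real k)" by (simp add: algebra_simps)
  have C: "ln (bk k) = real k * ln (real k) - (real k - 1) * ln (real (k - 1))"
    using ln_bk[OF k] unfolding r .
  show ?thesis using A B C lk by linarith
qed

lemma star:
  assumes k: "k \<ge> 2"
  shows "real (k - 1) * ln (bk k) \<le> real k * (1 + ln (real (k - 1))) - real (k - 1) / real k"
proof (cases "k = 2")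
  case True
  have "ln (bk 2) = 2 * ln 2" using ln_bk[of 2] by simp
  thus ?thesis using True ln2_le by simp
next
  case False
  hence k3: "k \<ge> 3" using k by simp
  define a where "a = ln (real (k - 1))"
  define d where "d = ln (real k) - a"
  have r: "real (k-1) = real k - 1" using k by simp
  have d_le: "d \<le> 1 / real (k - 1)"
  proof -
    have "d = ln (real k / real (k-1))" unfolding d_def a_def using k by (simp add: ln_div)
    also have "\<dots> \<le> real k / real (k-1) - 1" using k by (intro ln_le_minus_one) auto
    also have "\<dots> = 1 / real (k-1)" using k unfolding r by (simp add: field_simps)
    finally show ?thesis .
  qed
  have a_ge: "a \<ge> real (k-1) / real k"
  proof (cases "k = 3")
    case True
    hence "a = ln 2" unfolding a_def by simp
    thus ?thesis using ln2_ge_two_thirds True by simp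
  next
    case False
    hence "k \<ge> 4" using k3 by simp
    hence "ln (3::real) \<le> a" unfolding a_def by (subst ln_le_cancel_iff) auto
    moreover have "real (k-1) / real k \<le> 1" using k by simp
    ultimately show ?thesis using ln3_ge by linarith
  qed
  have lb: "ln (bk k) = a + real k * d" using ln_bk[OF k] unfolding d_def
    unfolding a_def r by (simp add: algebra_simps)
  have "real (k - 1) * ln (bk k) = real (k-1) * a + real k * (real (k-1) * d)"
    unfolding lb by (simp add: algebra_simps)
  also have "real (k-1) * d \<le> 1" using d_le k by (simp add: field_simps)
  hence "real k * (real (k-1) * d) \<le> real k" by (simp add: mult_left_le)
  hence "real (k-1) * a + real k * (real (k-1) * d) \<le> real (k-1) * a + real k" by simp
  also have "\<dots> \<le> real k * (1 + a) - real (k - 1) / real k" using a_ge unfolding r by (simp add: algebra_simps)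
  finally show ?thesis unfolding a_def .
qed

definition alk :: "nat \<Rightarrow> real" where "alk k = 1 - 1 / (real k)^2"
definition cck :: "nat \<Rightarrow> real" where "cck k = real k / ln (bk k)"

lemma keyK:
  assumes k: "k \<ge> 2" and p0: "0 \<le> p" and p1: "p \<le> 1"
  shows "real (k - 1) * (1 - cck k * alk k * p) \<le> - cck k * ln (1 / (real k)^2 + alk k * p)"
proof -
  define z where "z = 1 / (real k)^2 + alk k * p"
  have al0: "alk k \<ge> 0" unfolding alk_def using k by (simp add: field_simps)
  have kpos: "real k > 0" using k by simp
  have z0: "z > 0" unfolding z_def using al0 p0 kpos by (simp add: add_pos_nonneg)
  have k1: "real (k - 1) > 0" using k by simp
  have "ln (real (k-1) * z) \<le> real (k-1) * z - 1" using z0 k1 by (intro ln_le_minus_one) simp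
  hence lz: "ln z \<le> real (k-1) * z - 1 - ln (real (k-1))" using z0 k1 by (simp add: ln_mult)
  have lb: "ln (bk k) > 0" using ln_bk_pos[OF k] .
  have c0: "cck k > 0" unfolding cck_def using lb kpos by simp
  have st: "real (k - 1) \<le> cck k * (1 + ln (real (k-1)) - real (k-1) / (real k)^2)"
  proof -
    have eq: "real k * (1 + ln (real (k-1)) - real (k-1) / (real k)^2) = real k * (1 + ln (real (k - 1))) - real (k - 1) / real k"
      using kpos by (simp add: field_simps power2_eq_square)
    have "real (k - 1) * ln (bk k) \<le> real k * (1 + ln (real (k-1)) - real (k-1) / (real k)^2)"
      using star[OF k] unfolding eq .
    thus ?thesis unfolding cck_def using lb by (simp add: field_simps)
  qed
  have "- cck k * ln z \<ge> cck k * (1 + ln (real (k-1)) - real (k-1) * z)"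
  proof -
    have "cck k * ln z \<le> cck k * (real (k-1) * z - 1 - ln (real (k-1)))"
      using lz c0 by (intro mult_left_mono) auto
    thus ?thesis by (simp add: algebra_simps)
  qed
  also have "cck k * (1 + ln (real (k-1)) - real (k-1) * z)
     = cck k * (1 + ln (real (k-1)) - real (k-1) / (real k)^2) - real (k-1) * (cck k * alk k * p)"
    unfolding z_def by (simp add: algebra_simps)
  finally have "- cck k * ln z \<ge> real (k-1) - real (k-1) * (cck k * alk k * p)" using st by linarith
  thus ?thesis unfolding z_def by (simp add: algebra_simps)
qed

definition fcnt :: "obs list \<Rightarrow> expert \<Rightarrow> nat" where
  "fcnt H e = length (filter (\<lambda>(x, ok, yh). (ok \<and> x e \<noteq> yh) \<or> (\<not> ok \<and> x e = yh)) H)"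

definition wt :: "nat \<Rightarrow> obs list \<Rightarrow> expert \<Rightarrow> real" where
  "wt k H e = (if fcnt H e \<le> budget e then real k ^ (2 * (budget e - fcnt H e)) else 0)"

definition Phi :: "nat list \<Rightarrow> nat \<Rightarrow> obs list \<Rightarrow> real" where
  "Phi m k H = (\<Sum>e\<in>experts m. wt k H e)"

definition Wl :: "nat list \<Rightarrow> nat \<Rightarrow> obs list \<Rightarrow> inst \<Rightarrow> nat \<Rightarrow> real" where
  "Wl m k H x j = (\<Sum>e\<in>experts m. if x e = j then wt k H e else 0)"

lemma experts_Sigma: "experts m = (SIGMA i:{..<length m}. {..<m ! i})"
  unfolding experts_def by auto

lemma finite_experts: "finite (experts m)"
  unfolding experts_Sigma by auto

lemma wt_nonneg: "wt k H e \<ge> 0"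
  unfolding wt_def by auto

lemma Phi_nonneg: "Phi m k H \<ge> 0"
  unfolding Phi_def by (intro sum_nonneg wt_nonneg)

lemma Wl_nonneg: "Wl m k H x j \<ge> 0"
  unfolding Wl_def by (intro sum_nonneg) (auto intro: wt_nonneg)

lemma Wl_le: "Wl m k H x j \<le> Phi m k H"
  unfolding Wl_def Phi_def by (intro sum_mono) (auto intro: wt_nonneg)

lemma Phi_Wl_split: "Phi m k H = Wl m k H x j + (\<Sum>e\<in>experts m. if x e = j then 0 else wt k H e)"
  unfolding Wl_def Phi_def sum.distrib[symmetric] by (intro sum.cong) auto

lemma fcnt_snoc: "fcnt (H @ [(x, ok, yh)]) e = fcnt H e + (if (ok \<and> x e \<noteq> yh) \<or> (\<not> ok \<and> x e = yh) then 1 else 0)"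
  unfolding fcnt_def by auto

lemma wt_snoc:
  assumes k: "k \<ge> 1"
  shows "wt k (H @ [(x, ok, yh)]) e \<le> (if (ok \<and> x e \<noteq> yh) \<or> (\<not> ok \<and> x e = yh) then wt k H e / (real k)^2 else wt k H e)"
proof (cases "(ok \<and> x e \<noteq> yh) \<or> (\<not> ok \<and> x e = yh)")
  case False
  have f: "fcnt (H @ [(x, ok, yh)]) e = fcnt H e" unfolding fcnt_snoc if_not_P[OF False] by simp
  show ?thesis unfolding if_not_P[OF False] wt_def f by simp
next
  case True
  hence f: "fcnt (H @ [(x, ok, yh)]) e = Suc (fcnt H e)" unfolding fcnt_snoc by simp
  show ?thesis
  proof (cases "Suc (fcnt H e) \<le> budget e")
    case True
    have "2 * (budget e - fcnt H e) = 2 * (budget e - Suc (fcnt H e)) + 2" using True by simp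
    hence "real k ^ (2 * (budget e - fcnt H e)) = real k ^ (2 * (budget e - Suc (fcnt H e))) * (real k)^2"
      by (simp add: power_add power2_eq_square)
    hence "real k ^ (2 * (budget e - Suc (fcnt H e))) = real k ^ (2 * (budget e - fcnt H e)) / (real k)^2"
      using k by (simp add: field_simps)
    thus ?thesis using True \<open>(ok \<and> x e \<noteq> yh) \<or> (\<not> ok \<and> x e = yh)\<close> unfolding wt_def f by simp
  next
    case False
    thus ?thesis using \<open>(ok \<and> x e \<noteq> yh) \<or> (\<not> ok \<and> x e = yh)\<close> unfolding wt_def f
      by (simp add: wt_nonneg[unfolded wt_def])
  qed
qed

lemma Phi_snoc_True:
  assumes k: "k \<ge> 1"
  shows "Phi m k (H @ [(x, True, yh)]) \<le> Wl m k H x yh + (Phi m k H - Wl m k H x yh) / (real k)^2"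
proof -
  have "Phi m k (H @ [(x, True, yh)]) \<le> (\<Sum>e\<in>experts m. if x e \<noteq> yh then wt k H e / (real k)^2 else wt k H e)"
    unfolding Phi_def by (intro sum_mono) (use wt_snoc[OF k, of H x True yh] in auto)
  also have "\<dots> = Wl m k H x yh + (\<Sum>e\<in>experts m. if x e = yh then 0 else wt k H e) / (real k)^2"
    unfolding Wl_def sum_divide_distrib sum.distrib[symmetric] by (intro sum.cong) auto
  also have "(\<Sum>e\<in>experts m. if x e = yh then 0 else wt k H e) = Phi m k H - Wl m k H x yh"
    using Phi_Wl_split[of m k H x yh] by simp
  finally show ?thesis .
qed

lemma Phi_snoc_False:
  assumes k: "k \<ge> 1"
  shows "Phi m k (H @ [(x, False, yh)]) \<le> Phi m k H - Wl m k H x yh + Wl m k H x yh / (real k)^2"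
proof -
  have "Phi m k (H @ [(x, False, yh)]) \<le> (\<Sum>e\<in>experts m. if x e = yh then wt k H e / (real k)^2 else wt k H e)"
    unfolding Phi_def by (intro sum_mono) (use wt_snoc[OF k, of H x False yh] in auto)
  also have "\<dots> = Wl m k H x yh / (real k)^2 + (\<Sum>e\<in>experts m. if x e = yh then 0 else wt k H e)"
    unfolding Wl_def sum_divide_distrib sum.distrib[symmetric] by (intro sum.cong) auto
  also have "(\<Sum>e\<in>experts m. if x e = yh then 0 else wt k H e) = Phi m k H - Wl m k H x yh"
    using Phi_Wl_split[of m k H x yh] by simp
  finally show ?thesis by simp
qed

lemma Phi_Nil: "Phi m k [] = W m k"
proof -
  have "Phi m k [] = (\<Sum>e\<in>experts m. real k ^ (2 * budget e))"
    unfolding Phi_def wt_def fcnt_def by simp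
  also have "\<dots> = (\<Sum>i<length m. \<Sum>c<m ! i. real k ^ (2 * i))"
    unfolding experts_Sigma by (subst sum.Sigma) (simp_all add: budget_def split_beta)
  also have "\<dots> = W m k" unfolding W_def by simp
  finally show ?thesis .
qed

lemma realizable_cnt:
  assumes "realizable m k H"
  shows "\<exists>e\<in>experts m. fcnt H e \<le> budget e"
proof -
  obtain ys where ys: "length ys = length H"
    "\<forall>t < length H. fst (snd (H ! t)) \<longleftrightarrow> ys ! t = snd (snd (H ! t))"
    "zip (map fst H) ys \<in> Pclass m k"
    using assms unfolding realizable_def by blast
  define s where "s = zip (map fst H) ys"
  obtain e where e: "e \<in> experts m" "card {t. t < length s \<and> fst (s ! t) e \<noteq> snd (s ! t)} \<le> budget e"
    using ys(3) unfolding Pclass_def s_def by blast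
  have ls: "length s = length H" unfolding s_def using ys(1) by simp
  have "fcnt H e = card {t. t < length H \<and> (case H ! t of (x, ok, yh) \<Rightarrow> (ok \<and> x e \<noteq> yh) \<or> (\<not> ok \<and> x e = yh))}"
    unfolding fcnt_def by (simp add: length_filter_conv_card)
  also have "\<dots> \<le> card {t. t < length s \<and> fst (s ! t) e \<noteq> snd (s ! t)}"
  proof (intro card_mono)
    show "finite {t. t < length s \<and> fst (s ! t) e \<noteq> snd (s ! t)}" by simp
    show "{t. t < length H \<and> (case H ! t of (x, ok, yh) \<Rightarrow> (ok \<and> x e \<noteq> yh) \<or> (\<not> ok \<and> x e = yh))}
        \<subseteq> {t. t < length s \<and> fst (s ! t) e \<noteq> snd (s ! t)}"
    proof
      fix t assume "t \<in> {t. t < length H \<and> (case H ! t of (x, ok, yh) \<Rightarrow> (ok \<and> x e \<noteq> yh) \<or> (\<not> ok \<and> x e = yh))}"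
      hence t: "t < length H" "(case H ! t of (x, ok, yh) \<Rightarrow> (ok \<and> x e \<noteq> yh) \<or> (\<not> ok \<and> x e = yh))" by auto
      obtain x ok yh where h: "H ! t = (x, ok, yh)" by (cases "H ! t") auto
      have st: "s ! t = (x, ys ! t)" unfolding s_def using t(1) ys(1) h by simp
      have "ok \<longleftrightarrow> ys ! t = yh" using ys(2)[rule_format, OF t(1)] h by simp
      thus "t \<in> {t. t < length s \<and> fst (s ! t) e \<noteq> snd (s ! t)}"
        using t h st ls by auto
    qed
  qed
  finally show ?thesis using e by (meson order_trans)
qed

lemma realizable_Phi:
  assumes "realizable m k H" "k \<ge> 1"
  shows "Phi m k H \<ge> 1"
proof -
  obtain e where e: "e \<in> experts m" "fcnt H e \<le> budget e" using realizable_cnt[OF assms(1)] by blast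
  have "1 \<le> wt k H e" unfolding wt_def using e(2) assms(2) by (simp add: one_le_power)
  also have "\<dots> \<le> Phi m k H" unfolding Phi_def
    by (rule member_le_sum) (use e finite_experts wt_nonneg in auto)
  finally show ?thesis .
qed

definition pp :: "nat list \<Rightarrow> nat \<Rightarrow> obs list \<Rightarrow> inst \<Rightarrow> nat \<Rightarrow> real" where
  "pp m k H x j = Wl m k H x j / Phi m k H"
definition uu :: "nat list \<Rightarrow> nat \<Rightarrow> obs list \<Rightarrow> inst \<Rightarrow> nat \<Rightarrow> real" where
  "uu m k H x j = 1 - cck k * alk k * pp m k H x j"
definition GG :: "nat list \<Rightarrow> nat \<Rightarrow> obs list \<Rightarrow> inst \<Rightarrow> nat \<Rightarrow> real" where
  "GG m k H x j = - ln (1 / (real k)^2 + alk k * pp m k H x j)"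
definition dd :: "nat list \<Rightarrow> nat \<Rightarrow> obs list \<Rightarrow> inst \<Rightarrow> nat \<Rightarrow> real" where
  "dd m k H x j = uu m k H x j + cck k * GG m k H x j"
definition caseA :: "nat list \<Rightarrow> nat \<Rightarrow> obs list \<Rightarrow> inst \<Rightarrow> bool" where
  "caseA m k H x \<longleftrightarrow> (\<exists>j\<in>labels k. cck k * alk k * pp m k H x j \<ge> 1)"
definition jA :: "nat list \<Rightarrow> nat \<Rightarrow> obs list \<Rightarrow> inst \<Rightarrow> nat" where
  "jA m k H x = (LEAST j. j \<in> labels k \<and> cck k * alk k * pp m k H x j \<ge> 1)"
definition Ssum :: "nat list \<Rightarrow> nat \<Rightarrow> obs list \<Rightarrow> inst \<Rightarrow> real" where
  "Ssum m k H x = (\<Sum>i\<in>labels k. 1 / dd m k H x i)"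
definition piv :: "nat list \<Rightarrow> nat \<Rightarrow> obs list \<Rightarrow> inst \<Rightarrow> nat \<Rightarrow> real" where
  "piv m k H x j = (1 / dd m k H x j) / Ssum m k H x"
definition pil :: "nat list \<Rightarrow> nat \<Rightarrow> obs list \<Rightarrow> inst \<Rightarrow> (nat \<times> real) list" where
  "pil m k H x = map (\<lambda>j. (j, piv m k H x j)) [1..<Suc k]"
definition lrn :: "nat list \<Rightarrow> nat \<Rightarrow> learner" where
  "lrn m k H x = (if caseA m k H x then return_pmf (jA m k H x)
     else if pmf_of_list_wf (pil m k H x) then pmf_of_list (pil m k H x) else return_pmf 1)"

lemma labels_set: "labels k = set [1..<Suc k]"
  unfolding labels_def by auto

lemma finite_labels: "finite (labels k)" unfolding labels_def by simp

lemma card_labels: "card (labels k) = k" unfolding labels_def by simp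

lemma jA_prop:
  assumes "caseA m k H x"
  shows "jA m k H x \<in> labels k \<and> cck k * alk k * pp m k H x (jA m k H x) \<ge> 1"
proof -
  obtain j where "j \<in> labels k" "cck k * alk k * pp m k H x j \<ge> 1" using assms unfolding caseA_def by blast
  thus ?thesis unfolding jA_def using LeastI[of "\<lambda>j. j \<in> labels k \<and> cck k * alk k * pp m k H x j \<ge> 1" j] by blast
qed

lemma set_lrn: "k \<ge> 1 \<Longrightarrow> set_pmf (lrn m k H x) \<subseteq> labels k"
proof -
  assume k: "k \<ge> 1"
  show ?thesis
  proof (cases "caseA m k H x")
    case True thus ?thesis unfolding lrn_def using jA_prop[OF True] by simp
  next
    case False
    show ?thesis
    proof (cases "pmf_of_list_wf (pil m k H x)")
      case True
      have "set_pmf (pmf_of_list (pil m k H x)) \<subseteq> set (map fst (pil m k H x))" by (rule set_pmf_of_list[OF True])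
      also have "\<dots> = labels k" unfolding pil_def labels_set by (simp add: comp_def)
      finally show ?thesis unfolding lrn_def using False True by simp
    next
      case False2: False
      thus ?thesis unfolding lrn_def using False k by (simp add: labels_def)
    qed
  qed
qed

lemma valid_lrn: "k \<ge> 1 \<Longrightarrow> valid_learner k (lrn m k)"
  unfolding valid_learner_def using set_lrn by blast

lemma finite_set_lrn: "k \<ge> 1 \<Longrightarrow> finite (set_pmf (lrn m k H x))"
  using set_lrn finite_labels finite_subset by metis

lemma pp_nonneg: "pp m k H x j \<ge> 0"
  unfolding pp_def by (intro divide_nonneg_nonneg Wl_nonneg Phi_nonneg)

lemma pp_le1: "pp m k H x j \<le> 1"
proof (cases "Phi m k H = 0")
  case True thus ?thesis unfolding pp_def by simp
next
  case False
  hence "Phi m k H > 0" using Phi_nonneg[of m k H] by simp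
  thus ?thesis unfolding pp_def using Wl_le[of m k H x j] by simp
qed

lemma alk_bounds: "k \<ge> 2 \<Longrightarrow> 0 \<le> alk k \<and> alk k < 1"
  unfolding alk_def by (simp add: field_simps)

lemma cck_pos: "k \<ge> 2 \<Longrightarrow> cck k > 0"
  unfolding cck_def using ln_bk_pos by simp

lemma z_bounds:
  assumes k: "k \<ge> 2"
  shows "0 < 1 / (real k)^2 + alk k * pp m k H x j \<and> 1 / (real k)^2 + alk k * pp m k H x j \<le> 1"
proof -
  have a: "0 \<le> alk k" "alk k < 1" using alk_bounds[OF k] by auto
  have "alk k * pp m k H x j \<le> alk k" using a pp_le1[of m k H x j] by (simp add: mult_left_le)
  moreover have "alk k * pp m k H x j \<ge> 0" using a pp_nonneg[of m k H x j] by simp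
  moreover have "1 / (real k)^2 + alk k = 1" unfolding alk_def by simp
  moreover have "1 / (real k)^2 > 0" using k by simp
  ultimately show ?thesis by linarith
qed

lemma GG_nonneg: "k \<ge> 2 \<Longrightarrow> GG m k H x j \<ge> 0"
  unfolding GG_def using z_bounds by simp

lemma notA_facts:
  assumes k: "k \<ge> 2" and nA: "\<not> caseA m k H x"
  shows "\<And>j. j \<in> labels k \<Longrightarrow> uu m k H x j > 0 \<and> dd m k H x j > 0 \<and> real k * uu m k H x j \<le> dd m k H x j"
    and "Ssum m k H x > 0"
    and "pmf_of_list_wf (pil m k H x)"
    and "\<And>j. j \<in> labels k \<Longrightarrow> pmf (lrn m k H x) j = piv m k H x j"
    and "set_pmf (lrn m k H x) \<subseteq> labels k"
    and "sum (piv m k H x) (labels k) = 1"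
proof -
  show uj: "uu m k H x j > 0 \<and> dd m k H x j > 0 \<and> real k * uu m k H x j \<le> dd m k H x j" if j: "j \<in> labels k" for j
  proof -
    have "uu m k H x j > 0" using nA j unfolding caseA_def uu_def by force
    moreover have "cck k * GG m k H x j \<ge> 0" using cck_pos[OF k] GG_nonneg[OF k] by simp
    moreover have "real (k-1) * uu m k H x j \<le> cck k * GG m k H x j"
      using keyK[OF k pp_nonneg[of m k H x j] pp_le1[of m k H x j]] unfolding uu_def GG_def by simp
    moreover have "real (k - 1) = real k - 1" using k by simp
    ultimately show ?thesis unfolding dd_def by (simp add: algebra_simps)
  qed
  have ne: "labels k \<noteq> {}" using k unfolding labels_def by auto
  show S: "Ssum m k H x > 0" unfolding Ssum_def
    by (intro sum_pos finite_labels ne) (use uj in simp)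
  have pos: "piv m k H x j \<ge> 0" if "j \<in> labels k" for j
    unfolding piv_def using uj[OF that] S by simp
  show sum1: "sum (piv m k H x) (labels k) = 1"
    unfolding piv_def sum_divide_distrib[symmetric] using S unfolding Ssum_def by simp
  show wf: "pmf_of_list_wf (pil m k H x)"
  proof (rule pmf_of_list_wfI)
    fix z assume "z \<in> set (map snd (pil m k H x))"
    then obtain j where "j \<in> labels k" "z = piv m k H x j" unfolding pil_def labels_set by auto
    thus "z \<ge> 0" using pos by simp
  next
    have "sum_list (map snd (pil m k H x)) = sum_list (map (piv m k H x) [1..<Suc k])"
      unfolding pil_def by (simp add: comp_def)
    also have "\<dots> = sum (piv m k H x) (labels k)"
      unfolding labels_set by (rule sum_list_distinct_conv_sum_set) simp
    finally show "sum_list (map snd (pil m k H x)) = 1" using sum1 by simp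
  qed
  have lrn_eq: "lrn m k H x = pmf_of_list (pil m k H x)" unfolding lrn_def using nA wf by simp
  show "pmf (lrn m k H x) j = piv m k H x j" if j: "j \<in> labels k" for j
  proof -
    have "pmf (lrn m k H x) j = sum_list (map snd (filter (\<lambda>z. fst z = j) (pil m k H x)))"
      unfolding lrn_eq by (rule pmf_pmf_of_list[OF wf])
    also have "\<dots> = sum_list (map (piv m k H x) (filter (\<lambda>i. i = j) [1..<Suc k]))"
      unfolding pil_def by (simp add: filter_map comp_def)
    also have "\<dots> = sum (piv m k H x) (set (filter (\<lambda>i. i = j) [1..<Suc k]))"
      by (rule sum_list_distinct_conv_sum_set) simp
    also have "set (filter (\<lambda>i. i = j) [1..<Suc k]) = {j}" using j unfolding labels_def by auto
    finally show ?thesis by simp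
  qed
  show "set_pmf (lrn m k H x) \<subseteq> labels k" using set_lrn k by simp
qed

lemma ln_step_True:
  assumes k: "k \<ge> 2" and P0: "Phi m k H > 0" and P1: "Phi m k (H @ [(x, True, yh)]) > 0"
  shows "cck k * ln (Phi m k (H @ [(x, True, yh)])) \<le> cck k * ln (Phi m k H) - cck k * GG m k H x yh"
proof -
  define z where "z = 1 / (real k)^2 + alk k * pp m k H x yh"
  have z: "z > 0" unfolding z_def using z_bounds[OF k] by simp
  have "Phi m k (H @ [(x, True, yh)]) \<le> Wl m k H x yh + (Phi m k H - Wl m k H x yh) / (real k)^2"
    using Phi_snoc_True[of k m H x yh] k by simp
  also have "\<dots> = Phi m k H * z"
  proof -
    have "(real k)^2 \<noteq> 0" using k by simp
    thus ?thesis unfolding z_def pp_def alk_def using P0 by (simp add: field_simps)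
  qed
  finally have "ln (Phi m k (H @ [(x, True, yh)])) \<le> ln (Phi m k H * z)" using P1 by simp
  also have "\<dots> = ln (Phi m k H) - GG m k H x yh" using P0 z unfolding GG_def z_def by (simp add: ln_mult)
  finally show ?thesis using cck_pos[OF k] by (simp add: right_diff_distrib[symmetric])
qed

lemma ln_step_False:
  assumes k: "k \<ge> 2" and P0: "Phi m k H > 0" and P1: "Phi m k (H @ [(x, False, yh)]) > 0"
  shows "cck k * ln (Phi m k (H @ [(x, False, yh)])) \<le> cck k * ln (Phi m k H) - cck k * alk k * pp m k H x yh"
proof -
  define z where "z = 1 - alk k * pp m k H x yh"
  have "alk k * pp m k H x yh \<le> alk k" using alk_bounds[OF k] pp_le1[of m k H x yh] by (simp add: mult_left_le)
  hence z: "z > 0" unfolding z_def using alk_bounds[OF k] by simp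
  have "Phi m k (H @ [(x, False, yh)]) \<le> Phi m k H - Wl m k H x yh + Wl m k H x yh / (real k)^2"
    using Phi_snoc_False[of k m H x yh] k by simp
  also have "\<dots> = Phi m k H * z"
    unfolding z_def pp_def alk_def using P0 by (simp add: field_simps)
  finally have "ln (Phi m k (H @ [(x, False, yh)])) \<le> ln (Phi m k H * z)" using P1 by simp
  also have "\<dots> = ln (Phi m k H) + ln z" using P0 z by (simp add: ln_mult)
  also have "ln z \<le> z - 1" using z by (rule ln_le_minus_one)
  finally have "ln (Phi m k (H @ [(x, False, yh)])) \<le> ln (Phi m k H) - alk k * pp m k H x yh"
    unfolding z_def by simp
  hence "cck k * ln (Phi m k (H @ [(x, False, yh)])) \<le> cck k * (ln (Phi m k H) - alk k * pp m k H x yh)"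
    using cck_pos[OF k] by (intro mult_left_mono) auto
  thus ?thesis by (simp add: algebra_simps)
qed

lemma round_bound:
  assumes k: "k \<ge> 2" and P0: "Phi m k H > 0" and y: "y \<in> labels k"
    and P1: "\<forall>yh\<in>labels k. Phi m k (H @ [(x, yh = y, yh)]) > 0"
  shows "measure_pmf.expectation (lrn m k H x)
           (\<lambda>yh. C + of_bool (yh \<noteq> y) + cck k * ln (Phi m k (H @ [(x, yh = y, yh)])))
         \<le> C + cck k * ln (Phi m k H)"
proof -
  define f where "f yh = C + of_bool (yh \<noteq> y) + cck k * ln (Phi m k (H @ [(x, yh = y, yh)]))" for yh
  define P where "P = cck k * ln (Phi m k H)"
  define B where "B j = uu m k H x j - (if j = y then dd m k H x j else 0)" for j
  have fb: "f j \<le> C + P + B j" if j: "j \<in> labels k" for j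
  proof (cases "j = y")
    case True
    have "cck k * ln (Phi m k (H @ [(x, True, j)])) \<le> P - cck k * GG m k H x j"
      unfolding P_def using ln_step_True[OF k P0] P1 j True by auto
    thus ?thesis unfolding f_def B_def dd_def using True by simp
  next
    case False
    have "cck k * ln (Phi m k (H @ [(x, False, j)])) \<le> P - cck k * alk k * pp m k H x j"
      unfolding P_def using ln_step_False[OF k P0] P1 j False by force
    thus ?thesis unfolding f_def B_def uu_def using False by simp
  qed
  show ?thesis
  proof (cases "caseA m k H x")
    case True
    have j: "jA m k H x \<in> labels k" "cck k * alk k * pp m k H x (jA m k H x) \<ge> 1" using jA_prop[OF True] by auto
    have "B (jA m k H x) \<le> 0"
    proof (cases "jA m k H x = y")
      case True
      thus ?thesis unfolding B_def dd_def using GG_nonneg[OF k] cck_pos[OF k] by simp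
    next
      case False
      thus ?thesis unfolding B_def uu_def using j by simp
    qed
    hence "f (jA m k H x) \<le> C + P" using fb[OF j(1)] by simp
    thus ?thesis unfolding lrn_def using True by (simp add: f_def P_def)
  next
    case nA: False
    note F = notA_facts[OF k nA]
    have "measure_pmf.expectation (lrn m k H x) f = (\<Sum>j\<in>labels k. f j * pmf (lrn m k H x) j)"
      by (rule integral_measure_pmf_real) (use F(5) finite_labels in auto)
    also have "\<dots> = (\<Sum>j\<in>labels k. piv m k H x j * f j)"
      by (intro sum.cong) (auto simp: F(4))
    also have "\<dots> \<le> (\<Sum>j\<in>labels k. piv m k H x j * (C + P + B j))"
      by (intro sum_mono mult_left_mono fb) (auto simp: piv_def F(1) F(2) less_imp_le)
    also have "\<dots> = (C + P) * (\<Sum>j\<in>labels k. piv m k H x j) + (\<Sum>j\<in>labels k. piv m k H x j * uu m k H x j)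
        - (\<Sum>j\<in>labels k. piv m k H x j * (if j = y then dd m k H x j else 0))"
      unfolding B_def by (simp add: algebra_simps sum.distrib sum_subtractf sum_distrib_left)
    also have "(\<Sum>j\<in>labels k. piv m k H x j * (if j = y then dd m k H x j else 0)) = piv m k H x y * dd m k H x y"
      using y finite_labels by (simp add: if_distrib cong: if_cong)
    also have "piv m k H x y * dd m k H x y = 1 / Ssum m k H x"
      unfolding piv_def using F(1)[OF y] by simp
    also have "(\<Sum>j\<in>labels k. piv m k H x j * uu m k H x j) \<le> (\<Sum>j\<in>labels k. (1 / real k) / Ssum m k H x)"
    proof (intro sum_mono)
      fix j assume j: "j \<in> labels k"
      have "real k * uu m k H x j \<le> dd m k H x j" "dd m k H x j > 0" using F(1)[OF j] by auto
      hence "uu m k H x j / dd m k H x j \<le> 1 / real k" using k by (simp add: field_simps)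
      moreover have "piv m k H x j * uu m k H x j = (uu m k H x j / dd m k H x j) / Ssum m k H x"
        unfolding piv_def by simp
      ultimately show "piv m k H x j * uu m k H x j \<le> (1 / real k) / Ssum m k H x"
        using F(2) divide_right_mono[of "uu m k H x j / dd m k H x j" "1 / real k" "Ssum m k H x"]
        by (simp only:)
    qed
    also have "(\<Sum>j\<in>labels k. (1 / real k) / Ssum m k H x) = 1 / Ssum m k H x"
      using k by (simp add: card_labels)
    finally have "measure_pmf.expectation (lrn m k H x) f \<le> C + P"
      using F(6) by simp
    thus ?thesis unfolding f_def P_def .
  qed
qed

lemma exp_le_const:
  fixes f :: "'a \<Rightarrow> real"
  assumes fin: "finite (set_pmf M)" and le: "\<forall>a\<in>set_pmf M. f a \<le> C"
  shows "measure_pmf.expectation M f \<le> C"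
proof -
  have "measure_pmf.expectation M f = (\<Sum>a\<in>set_pmf M. f a * pmf M a)"
    by (rule integral_measure_pmf_real) (use fin in auto)
  also have "\<dots> \<le> (\<Sum>a\<in>set_pmf M. C * pmf M a)"
    by (intro sum_mono mult_right_mono) (use le in auto)
  also have "\<dots> = C" using sum_pmf_eq_1[OF fin order.refl] by (simp add: sum_distrib_left[symmetric])
  finally show ?thesis .
qed

lemma exp_mono:
  fixes f g :: "'a \<Rightarrow> real"
  assumes fin: "finite (set_pmf M)" and le: "\<forall>a\<in>set_pmf M. f a \<le> g a"
  shows "measure_pmf.expectation M f \<le> measure_pmf.expectation M g"
proof -
  have "measure_pmf.expectation M f = (\<Sum>a\<in>set_pmf M. f a * pmf M a)"
    by (rule integral_measure_pmf_real) (use fin in auto)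
  also have "\<dots> \<le> (\<Sum>a\<in>set_pmf M. g a * pmf M a)"
    by (intro sum_mono mult_right_mono) (use le in auto)
  also have "\<dots> = measure_pmf.expectation M g"
    by (rule integral_measure_pmf_real[symmetric]) (use fin in auto)
  finally show ?thesis .
qed

lemma exp_bind_le:
  fixes f :: "'b \<Rightarrow> real" and g :: "'a \<Rightarrow> real" and M :: "'a pmf"
  assumes fin: "finite (set_pmf M)" and fin2: "\<forall>a\<in>set_pmf M. finite (set_pmf (N a))"
    and le: "\<forall>a\<in>set_pmf M. measure_pmf.expectation (N a) f \<le> g a"
  shows "measure_pmf.expectation (M \<bind> N) f \<le> measure_pmf.expectation M g"
proof -
  have "measure_pmf.expectation (M \<bind> N) f = (\<Sum>a\<in>set_pmf M. pmf M a *\<^sub>R measure_pmf.expectation (N a) f)"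
    by (rule pmf_expectation_bind) (use fin fin2 in auto)
  also have "\<dots> \<le> (\<Sum>a\<in>set_pmf M. g a * pmf M a)"
  proof (intro sum_mono)
    fix a assume a: "a \<in> set_pmf M"
    hence "pmf M a * measure_pmf.expectation (N a) f \<le> pmf M a * g a"
      using le by (intro mult_left_mono) auto
    thus "pmf M a *\<^sub>R measure_pmf.expectation (N a) f \<le> g a * pmf M a" by (simp add: mult.commute)
  qed
  also have "\<dots> = measure_pmf.expectation M g"
    by (rule integral_measure_pmf_real[symmetric]) (use fin in auto)
  finally show ?thesis .
qed

lemma exp_bind_return:
  fixes f :: "'b \<Rightarrow> real"
  assumes fin: "finite (set_pmf M)"
  shows "measure_pmf.expectation (M \<bind> (\<lambda>a. return_pmf (G a))) f = measure_pmf.expectation M (\<lambda>a. f (G a))"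
proof -
  have "measure_pmf.expectation (M \<bind> (\<lambda>a. return_pmf (G a))) f = (\<Sum>a\<in>set_pmf M. pmf M a *\<^sub>R f (G a))"
    by (subst pmf_expectation_bind[of "set_pmf M"]) (use fin in auto)
  also have "\<dots> = measure_pmf.expectation M (\<lambda>a. f (G a))"
    by (subst integral_measure_pmf_real[of "set_pmf M"]) (use fin in \<open>auto simp: mult.commute\<close>)
  finally show ?thesis .
qed

lemma mistakes_snoc: "mistakes (h @ [(x, p, t, yh, y)]) = mistakes h + (if yh \<noteq> y then 1 else 0)"
  unfolding mistakes_def by simp

lemma mistakes_Nil: "mistakes [] = 0" unfolding mistakes_def by simp

lemma observe_snoc: "observe (h @ [(x, p, t, yh, y)]) = observe h @ [(x, yh = y, yh)]"
  unfolding observe_def by simp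

lemma realizable_Nil:
  assumes "\<exists>i < length m. m ! i > 0"
  shows "realizable m k []"
proof -
  obtain i where i: "i < length m" "m ! i > 0" using assms by blast
  hence "(i, 0) \<in> experts m" unfolding experts_def by simp
  hence "[] \<in> Pclass m k" unfolding Pclass_def by force
  thus ?thesis unfolding realizable_def by simp
qed

definition FF :: "nat list \<Rightarrow> nat \<Rightarrow> round list \<Rightarrow> real" where
  "FF m k h = real (mistakes h) + cck k * ln (Phi m k (observe h))"

lemma play_round_step:
  assumes k: "k \<ge> 2" and A: "valid_adversary m k A" and h: "realizable m k (observe h)"
  shows "finite (set_pmf (play_round (lrn m k) A h))"
    and "\<forall>g\<in>set_pmf (play_round (lrn m k) A h). realizable m k (observe g)"
    and "measure_pmf.expectation (play_round (lrn m k) A h) (FF m k) \<le> FF m k h"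
proof -
  define x where "x = fst A h"
  define pi where "pi = lrn m k (observe h) x"
  define tau where "tau = snd A h pi"
  have pr: "play_round (lrn m k) A h = pi \<bind> (\<lambda>yh. tau \<bind> (\<lambda>y. return_pmf (h @ [(x, pi, tau, yh, y)])))"
    unfolding play_round_def x_def pi_def tau_def Let_def by simp
  have spi: "set_pmf pi \<subseteq> labels k" unfolding pi_def using set_lrn k by simp
  have stau: "set_pmf tau \<subseteq> labels k" using A unfolding valid_adversary_def tau_def by blast
  have fpi: "finite (set_pmf pi)" using spi finite_labels finite_subset by blast
  have ftau: "finite (set_pmf tau)" using stau finite_labels finite_subset by blast
  have real_after: "realizable m k (observe h @ [(x, yh = y, yh)])" if "y \<in> set_pmf tau" "yh \<in> labels k" for y yh
    using A h that unfolding valid_adversary_def tau_def x_def by blast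
  have sp: "set_pmf (play_round (lrn m k) A h) = (\<Union>yh\<in>set_pmf pi. \<Union>y\<in>set_pmf tau. {h @ [(x, pi, tau, yh, y)]})"
    unfolding pr by simp
  show "finite (set_pmf (play_round (lrn m k) A h))" unfolding sp using fpi ftau by auto
  show "\<forall>g\<in>set_pmf (play_round (lrn m k) A h). realizable m k (observe g)"
    unfolding sp using real_after spi by (auto simp: observe_snoc)
  have P0: "Phi m k (observe h) > 0" using realizable_Phi[OF h] k by simp
  have pr2: "play_round (lrn m k) A h = tau \<bind> (\<lambda>y. pi \<bind> (\<lambda>yh. return_pmf (h @ [(x, pi, tau, yh, y)])))"
    unfolding pr by (rule bind_commute_pmf)
  have inner: "\<forall>y\<in>set_pmf tau. measure_pmf.expectation (pi \<bind> (\<lambda>yh. return_pmf (h @ [(x, pi, tau, yh, y)]))) (FF m k) \<le> FF m k h"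
  proof
    fix y assume y: "y \<in> set_pmf tau"
    have yl: "y \<in> labels k" using y stau by auto
    have P1: "\<forall>yh\<in>labels k. Phi m k (observe h @ [(x, yh = y, yh)]) > 0"
    proof
      fix yh assume "yh \<in> labels k"
      hence "Phi m k (observe h @ [(x, yh = y, yh)]) \<ge> 1" using real_after[OF y] realizable_Phi k by simp
      thus "Phi m k (observe h @ [(x, yh = y, yh)]) > 0" by simp
    qed
    have "measure_pmf.expectation (pi \<bind> (\<lambda>yh. return_pmf (h @ [(x, pi, tau, yh, y)]))) (FF m k)
        = measure_pmf.expectation pi (\<lambda>yh. FF m k (h @ [(x, pi, tau, yh, y)]))"
      by (rule exp_bind_return[OF fpi])
    also have "(\<lambda>yh. FF m k (h @ [(x, pi, tau, yh, y)])) =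
        (\<lambda>yh. real (mistakes h) + of_bool (yh \<noteq> y) + cck k * ln (Phi m k (observe h @ [(x, yh = y, yh)])))"
      unfolding FF_def by (auto simp: mistakes_snoc observe_snoc)
    also have "measure_pmf.expectation pi \<dots> \<le> real (mistakes h) + cck k * ln (Phi m k (observe h))"
      unfolding pi_def by (rule round_bound[OF k P0 yl P1])
    finally show "measure_pmf.expectation (pi \<bind> (\<lambda>yh. return_pmf (h @ [(x, pi, tau, yh, y)]))) (FF m k) \<le> FF m k h"
      unfolding FF_def .
  qed
  have "measure_pmf.expectation (tau \<bind> (\<lambda>y. pi \<bind> (\<lambda>yh. return_pmf (h @ [(x, pi, tau, yh, y)])))) (FF m k)
      \<le> measure_pmf.expectation tau (\<lambda>_. FF m k h)"
    by (rule exp_bind_le) (use ftau fpi inner in auto)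
  also have "\<dots> \<le> FF m k h"
    by (rule exp_le_const) (use ftau in auto)
  finally show "measure_pmf.expectation (play_round (lrn m k) A h) (FF m k) \<le> FF m k h"
    unfolding pr2 .
qed

lemma play_inv:
  assumes k: "k \<ge> 2" and A: "valid_adversary m k A" and m: "\<exists>i < length m. m ! i > 0"
  shows "finite (set_pmf (play (lrn m k) A T)) \<and> (\<forall>h\<in>set_pmf (play (lrn m k) A T). realizable m k (observe h))
    \<and> measure_pmf.expectation (play (lrn m k) A T) (FF m k) \<le> cck k * ln (W m k)"
proof (induction T)
  case 0
  have "realizable m k []" by (rule realizable_Nil[OF m])
  thus ?case by (simp add: FF_def mistakes_Nil observe_def Phi_Nil)
next
  case (Suc T)
  note IH = Suc.IH
  have fin: "finite (set_pmf (play (lrn m k) A T))" using IH by blast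
  have re: "\<forall>h\<in>set_pmf (play (lrn m k) A T). realizable m k (observe h)" using IH by blast
  note st = play_round_step[OF k A]
  have "finite (set_pmf (play (lrn m k) A (Suc T)))" using fin re st(1) by auto
  moreover have "\<forall>h\<in>set_pmf (play (lrn m k) A (Suc T)). realizable m k (observe h)" using re st(2) by auto
  moreover have "measure_pmf.expectation (play (lrn m k) A (Suc T)) (FF m k) \<le> cck k * ln (W m k)"
  proof -
    have "measure_pmf.expectation (play (lrn m k) A (Suc T)) (FF m k)
        \<le> measure_pmf.expectation (play (lrn m k) A T) (FF m k)"
      unfolding play.simps by (rule exp_bind_le) (use fin re st(1) st(3) in auto)
    also have "\<dots> \<le> cck k * ln (W m k)" using IH by blast
    finally show ?thesis .
  qed
  ultimately show ?case by blast
qed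

lemma exp_mistakes_bound:
  assumes k: "k \<ge> 2" and A: "valid_adversary m k A" and m: "\<exists>i < length m. m ! i > 0"
  shows "expected_mistakes (lrn m k) A T \<le> cck k * ln (W m k)"
proof -
  note I = play_inv[OF k A m, of T]
  have "expected_mistakes (lrn m k) A T \<le> measure_pmf.expectation (play (lrn m k) A T) (FF m k)"
    unfolding expected_mistakes_def
  proof (rule exp_mono)
    show "finite (set_pmf (play (lrn m k) A T))" using I by blast
    show "\<forall>a\<in>set_pmf (play (lrn m k) A T). real (mistakes a) \<le> FF m k a"
    proof
      fix a assume "a \<in> set_pmf (play (lrn m k) A T)"
      hence "Phi m k (observe a) \<ge> 1" using I realizable_Phi k by auto
      hence "ln (Phi m k (observe a)) \<ge> 0" by simp
      thus "real (mistakes a) \<le> FF m k a" unfolding FF_def using cck_pos[OF k] by simp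
    qed
  qed
  also have "\<dots> \<le> cck k * ln (W m k)" using I by blast
  finally show ?thesis .
qed

theorem lemma4p8:
  fixes k :: nat and m :: "nat list"
  assumes "k \<ge> 2" and "m \<noteq> []" and "\<exists>i < length m. m ! i > 0"
  shows "V m k \<le> ereal (real k * log (bk k) (W m k))"
proof -
  have eq: "cck k * ln (W m k) = real k * log (bk k) (W m k)"
    unfolding cck_def log_def by simp
  have "V m k \<le> (SUP A \<in> {A. valid_adversary m k A}. SUP T. ereal (expected_mistakes (lrn m k) A T))"
    unfolding V_def by (rule INF_lower) (use valid_lrn assms(1) in auto)
  also have "\<dots> \<le> ereal (real k * log (bk k) (W m k))"
  proof (rule SUP_least)+
    fix A T assume "A \<in> {A. valid_adversary m k A}"
    thus "ereal (expected_mistakes (lrn m k) A T) \<le> ereal (real k * log (bk k) (W m k))"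
      using exp_mistakes_bound[OF assms(1) _ assms(3)] eq by simp
  qed
  finally show ?thesis .
qed

end
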